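(* Let $(G,s,t)$ be an oriented serial superedge whose principal subgraphs are $(G_1,s_1,t_1),\dots,(G_k,s_k,t_k)$, where $s=s_1$, $t_i=s_{i+1}$ for $1\le i\le k$, and $s_{k+1}=t$, and suppose each $G_i$ is non-serial. Then $\mathrm{Aut}_{\mathrm{or}}(G,s,t)\cong\prod_{i=1}^k\mathrm{Aut}_{\mathrm{or}}(G_i,s_i,t_i)$.
   Context: All graphs are finite, simple and undirected. An oriented series-parallel graph is a triple $(G,s,t)$ where $G$ is a graph and $s\neq t$ are vertices, defined recursively: (i) $G$ is a single edge with vertex set $\{s,t\}$; or (ii) (serial superedge) there are $k\ge 2$ oriented series-parallel graphs $(G_1,s_1,t_1),\dots,(G_k,s_k,t_k)$ with $s_1=s$, $t_k=t$, $t_i=s_{i+1}$ for $1\le i<k$, $V(G_i)\cap V(G_{i+1})=\{s_{i+1}\}$, $V(G_i)\cap V(G_j)=\emptyset$ for $|i-j|\ge2$, and $G=G_1\cup\dots\cup G_k$; or (iii) (parallel superedge) there are $k\ge2$ oriented series-parallel graphs $(G_1,s,t),\dots,(G_k,s,t)$ with $V(G_i)\cap V(G_j)=\{s,t\}$ for $i\neq j$ and $G=G_1\cup\dots\cup G_k$. The $G_i$ are the principal subgraphs. A graph is non-serial if it is not a serial superedge. For an oriented series-parallel graph $(H,u,v)$, $\mathrm{Aut}_{\mathrm{or}}(H,u,v)$ is the group of automorphisms of $H$ fixing both $u$ and $v$. *)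

theory Defs
  imports Main "HOL-Algebra.Product_Groups"
begin

(* A graph is given by a vertex set V :: 'a set and an edge set E :: 'a set set
   (edges are 2-element vertex sets).  A component of a decomposition is a
   quadruple (V_i, E_i, s_i, t_i). *)
type_synonym 'a comp = "'a set \<times> 'a set set \<times> 'a \<times> 'a"

definition cV :: "'a comp \<Rightarrow> 'a set" where "cV c = fst c"
definition cE :: "'a comp \<Rightarrow> 'a set set" where "cE c = fst (snd c)"
definition cs :: "'a comp \<Rightarrow> 'a" where "cs c = fst (snd (snd c))"
definition ct :: "'a comp \<Rightarrow> 'a" where "ct c = snd (snd (snd c))"

(* Condition (ii), without the requirement that the pieces are oriented SP graphs *)
definition serial_cond :: "'a set \<Rightarrow> 'a set set \<Rightarrow> 'a \<Rightarrow> 'a \<Rightarrow> 'a comp list \<Rightarrow> bool" where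
  "serial_cond V E s t Gs \<longleftrightarrow>
     length Gs \<ge> 2 \<and>
     cs (Gs ! 0) = s \<and> ct (Gs ! (length Gs - 1)) = t \<and>
     (\<forall>i. Suc i < length Gs \<longrightarrow>
          ct (Gs ! i) = cs (Gs ! Suc i) \<and>
          cV (Gs ! i) \<inter> cV (Gs ! Suc i) = {cs (Gs ! Suc i)}) \<and>
     (\<forall>i j. i < length Gs \<and> j < length Gs \<and> i + 2 \<le> j \<longrightarrow> cV (Gs ! i) \<inter> cV (Gs ! j) = {}) \<and>
     V = (\<Union>i<length Gs. cV (Gs ! i)) \<and> E = (\<Union>i<length Gs. cE (Gs ! i))"

(* Condition (iii), without the requirement that the pieces are oriented SP graphs *)
definition parallel_cond :: "'a set \<Rightarrow> 'a set set \<Rightarrow> 'a \<Rightarrow> 'a \<Rightarrow> 'a comp list \<Rightarrow> bool" where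
  "parallel_cond V E s t Gs \<longleftrightarrow>
     length Gs \<ge> 2 \<and>
     (\<forall>i < length Gs. cs (Gs ! i) = s \<and> ct (Gs ! i) = t) \<and>
     (\<forall>i j. i < length Gs \<and> j < length Gs \<and> i \<noteq> j \<longrightarrow> cV (Gs ! i) \<inter> cV (Gs ! j) = {s, t}) \<and>
     V = (\<Union>i<length Gs. cV (Gs ! i)) \<and> E = (\<Union>i<length Gs. cE (Gs ! i))"

inductive osp :: "'a set \<Rightarrow> 'a set set \<Rightarrow> 'a \<Rightarrow> 'a \<Rightarrow> bool" where
  edge: "s \<noteq> t \<Longrightarrow> osp {s, t} {{s, t}} s t"
| serial: "serial_cond V E s t Gs \<Longrightarrow>
           \<forall>i < length Gs. osp (cV (Gs ! i)) (cE (Gs ! i)) (cs (Gs ! i)) (ct (Gs ! i)) \<Longrightarrow>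
           osp V E s t"
| parallel: "parallel_cond V E s t Gs \<Longrightarrow>
           \<forall>i < length Gs. osp (cV (Gs ! i)) (cE (Gs ! i)) (cs (Gs ! i)) (ct (Gs ! i)) \<Longrightarrow>
           osp V E s t"

definition serial_superedge :: "'a set \<Rightarrow> 'a set set \<Rightarrow> 'a \<Rightarrow> 'a \<Rightarrow> bool" where
  "serial_superedge V E s t \<longleftrightarrow>
     (\<exists>Gs. serial_cond V E s t Gs \<and>
           (\<forall>i < length Gs. osp (cV (Gs ! i)) (cE (Gs ! i)) (cs (Gs ! i)) (ct (Gs ! i))))"

definition non_serial :: "'a set \<Rightarrow> 'a set set \<Rightarrow> 'a \<Rightarrow> 'a \<Rightarrow> bool" where
  "non_serial V E s t \<longleftrightarrow> \<not> serial_superedge V E s t"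

(* Aut_or(G,s,t): automorphisms of G fixing s and t, as a group of permutations
   of V (extended by the identity outside V) under composition *)
definition Aut_or :: "'a set \<Rightarrow> 'a set set \<Rightarrow> 'a \<Rightarrow> 'a \<Rightarrow> ('a \<Rightarrow> 'a) monoid" where
  "Aut_or V E s t = \<lparr> carrier = {f. bij_betw f V V \<and> (\<lambda>e. f ` e) ` E = E \<and>
                                    f s = s \<and> f t = t \<and> (\<forall>x. x \<notin> V \<longrightarrow> f x = x)},
                     monoid.mult = (\<lambda>f g. f \<circ> g),
                     one = id \<rparr>"

end

theory Submission
  imports Defs
begin

inductive reach :: "'a set set \<Rightarrow> 'a set \<Rightarrow> 'a \<Rightarrow> 'a \<Rightarrow> bool" for E W where
  rrefl: "a \<in> W \<Longrightarrow> reach E W a a"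
| rstep: "reach E W a b \<Longrightarrow> {b, c} \<in> E \<Longrightarrow> c \<in> W \<Longrightarrow> reach E W a c"

lemma reach_W: "reach E W a b \<Longrightarrow> a \<in> W \<and> b \<in> W"
  by (induction rule: reach.induct) auto

lemma reach_trans: "reach E W b c \<Longrightarrow> reach E W a b \<Longrightarrow> reach E W a c"
  by (induction rule: reach.induct) (auto intro: reach.rstep)

lemma reach_edge: "{a, b} \<in> E \<Longrightarrow> a \<in> W \<Longrightarrow> b \<in> W \<Longrightarrow> reach E W a b"
  by (meson reach.rrefl reach.rstep)

lemma reach_sym: "reach E W a b \<Longrightarrow> reach E W b a"
proof (induction rule: reach.induct)
  case (rrefl a) then show ?case by (rule reach.rrefl)
next
  case (rstep a b c)
  have "reach E W c b" using rstep reach_W[OF rstep(1)] 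
    by (intro reach_edge) (auto simp: insert_commute)
  then show ?case using rstep reach_trans by metis
qed

lemma reach_mono: "reach E W a b \<Longrightarrow> E \<subseteq> E' \<Longrightarrow> W \<subseteq> W' \<Longrightarrow> reach E' W' a b"
  by (induction rule: reach.induct) (auto intro: reach.intros)

lemma reach_chain:
  assumes "\<And>p. a \<le> p \<Longrightarrow> p < b \<Longrightarrow> reach E W (c p) (c (Suc p))" "c a \<in> W" "a \<le> b"
  shows "reach E W (c a) (c b)"
  using assms
proof (induction b)
  case 0 then show ?case by (auto intro: reach.rrefl)
next
  case (Suc b)
  show ?case
  proof (cases "a = Suc b")
    case True then show ?thesis using Suc by (auto intro: reach.rrefl)
  next
    case False
    then have "reach E W (c a) (c b)" using Suc by auto
    moreover have "reach E W (c b) (c (Suc b))" using Suc False by auto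
    ultimately show ?thesis using reach_trans by metis
  qed
qed

lemma reach_transfer:
  assumes "\<forall>x y. {x, y} \<in> E \<longrightarrow> {f x, f y} \<in> E"
  shows "reach E W a b \<Longrightarrow> reach E (f ` W) (f a) (f b)"
proof (induction rule: reach.induct)
  case (rrefl a) then show ?case by (auto intro: reach.rrefl)
next
  case (rstep b c) then show ?case using assms by (auto intro: reach.rstep)
qed

lemma reach_transfer_back:
  assumes "inj f" "\<forall>x y. {f x, f y} \<in> E \<longrightarrow> {x, y} \<in> E"
  shows "reach E (f ` W) x y \<Longrightarrow> x = f a \<Longrightarrow> y = f b \<Longrightarrow> reach E W a b"
proof (induction arbitrary: b rule: reach.induct)
  case (rrefl x) then show ?case using assms(1) by (auto intro: reach.rrefl dest: injD)
next
  case (rstep x y z)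
  obtain y0 where y0: "y = f y0" "y0 \<in> W" using reach_W[OF rstep(1)] by auto
  have "reach E W a y0" using rstep y0 by auto
  moreover have "{y0, b} \<in> E" using assms(2) rstep y0 by auto
  moreover have "b \<in> W" using rstep(3,6) assms(1) by (auto dest: injD)
  ultimately show ?case by (rule reach.rstep)
qed

definition basic :: "'a set \<Rightarrow> 'a set set \<Rightarrow> 'a \<Rightarrow> 'a \<Rightarrow> bool" where
  "basic V E s t \<longleftrightarrow> s \<noteq> t \<and> s \<in> V \<and> t \<in> V \<and>
     (\<forall>e\<in>E. \<exists>x y. x \<noteq> y \<and> e = {x, y} \<and> x \<in> V \<and> y \<in> V) \<and>
     reach E V s t \<and> (\<forall>v\<in>V. v \<noteq> t \<longrightarrow> reach E (V - {t}) s v)"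

locale sc =
  fixes V :: "'a set" and E :: "'a set set" and s t :: 'a and Gs :: "'a comp list"
  assumes scond: "serial_cond V E s t Gs"
    and pb: "\<forall>i < length Gs. basic (cV (Gs!i)) (cE (Gs!i)) (cs (Gs!i)) (ct (Gs!i))"
begin

definition VV where "VV i = cV (Gs!i)"
definition EE where "EE i = cE (Gs!i)"
definition c where "c j = (if j < length Gs then cs (Gs!j) else t)"

lemma k2: "2 \<le> length Gs" using scond by (simp add: serial_cond_def)
lemma k0: "0 < length Gs" using k2 by (cases Gs) auto
lemma c0: "c 0 = s" using scond k0 by (simp add: serial_cond_def c_def)
lemma ck: "c (length Gs) = t" by (simp add: c_def)
lemma cs_eq: "i < length Gs \<Longrightarrow> cs (Gs!i) = c i" by (simp add: c_def)
lemma ct_eq: "i < length Gs \<Longrightarrow> ct (Gs!i) = c (Suc i)"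
proof -
  assume i: "i < length Gs"
  show ?thesis
  proof (cases "Suc i < length Gs")
    case True then show ?thesis using scond by (simp add: serial_cond_def c_def)
  next
    case False
    then have "i = length Gs - 1" using i by auto
    then show ?thesis using scond False by (simp add: serial_cond_def c_def)
  qed
qed

lemma pbasic: "i < length Gs \<Longrightarrow> basic (VV i) (EE i) (c i) (c (Suc i))"
  using pb cs_eq ct_eq by (auto simp: VV_def EE_def)

lemma c_in: "i < length Gs \<Longrightarrow> c i \<in> VV i" "i < length Gs \<Longrightarrow> c (Suc i) \<in> VV i"
  using pbasic[of i, unfolded basic_def] by blast+

lemma c_ne: "i < length Gs \<Longrightarrow> c i \<noteq> c (Suc i)"
  using pbasic[of i, unfolded basic_def] by blast

lemma V_eq: "V = (\<Union>i<length Gs. VV i)" using scond by (simp add: serial_cond_def VV_def)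
lemma E_eq: "E = (\<Union>i<length Gs. EE i)" using scond by (simp add: serial_cond_def EE_def)
lemma VV_sub: "i < length Gs \<Longrightarrow> VV i \<subseteq> V" using V_eq by auto
lemma EE_sub: "i < length Gs \<Longrightarrow> EE i \<subseteq> E" using E_eq by auto

lemma inter: "i < j \<Longrightarrow> j < length Gs \<Longrightarrow> x \<in> VV i \<Longrightarrow> x \<in> VV j \<Longrightarrow> j = Suc i \<and> x = c j"
proof -
  assume a: "i < j" "j < length Gs" "x \<in> VV i" "x \<in> VV j"
  show ?thesis
  proof (cases "i + 2 \<le> j")
    case True
    then have "VV i \<inter> VV j = {}" using scond a by (simp add: serial_cond_def VV_def)
    then show ?thesis using a by auto
  next
    case False
    then have j: "j = Suc i" using a by auto
    then have "VV i \<inter> VV j = {c j}" using scond a by (simp add: serial_cond_def VV_def c_def)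
    then show ?thesis using a j by auto
  qed
qed

lemma c_inj: "i < j \<Longrightarrow> j \<le> length Gs \<Longrightarrow> c i \<noteq> c j"
proof
  assume a: "i < j" "j \<le> length Gs" "c i = c j"
  have j1: "Suc (j - 1) = j" "j - 1 < length Gs" using a by auto
  have "c j \<in> VV (j - 1)" using c_in(2)[OF j1(2)] j1 by simp
  show False
  proof (cases "j - 1 = i")
    case True then show False using c_ne[of i] a j1 by auto
  next
    case False
    then have "i < j - 1" using a by auto
    then have "j - 1 = Suc i \<and> c i = c (j - 1)"
      using inter[of i "j - 1" "c i"] c_in(1)[of i] a \<open>c j \<in> VV (j - 1)\<close> j1 by auto
    then show False using c_ne[of i] a by auto
  qed
qed

lemma cmem: "j \<le> length Gs \<Longrightarrow> m < length Gs \<Longrightarrow> c j \<in> VV m \<Longrightarrow> m = j \<or> Suc m = j"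
proof -
  assume a: "j \<le> length Gs" "m < length Gs" "c j \<in> VV m"
  obtain n where n: "n < length Gs" "c j \<in> VV n" "n = j \<or> Suc n = j"
  proof (cases "j < length Gs")
    case True then show ?thesis using that c_in(1) by auto
  next
    case False
    then obtain j' where j': "j = Suc j'" using a k0 by (cases j) auto
    then have "j' < length Gs" using a by simp
    show ?thesis by (rule that[of j']) (use \<open>j' < length Gs\<close> c_in(2)[of j'] j' in auto)
  qed
  show ?thesis
  proof (cases m n rule: linorder_cases)
    case less
    then have "n = Suc m \<and> c j = c n" using inter[of m n "c j"] a n by auto
    then show ?thesis using n c_inj[of n j] a by auto
  next
    case equal then show ?thesis using n by auto
  next
    case greater
    then have "m = Suc n \<and> c j = c m" using inter[of n m "c j"] a n by auto
    then show ?thesis using n c_inj[of j m] a by auto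
  qed
qed

lemma edge_piece: "e \<in> E \<Longrightarrow> \<exists>i<length Gs. e \<in> EE i" using E_eq by auto

lemma edge_two: "i < length Gs \<Longrightarrow> e \<in> EE i \<Longrightarrow> \<exists>x y. x \<noteq> y \<and> e = {x, y} \<and> x \<in> VV i \<and> y \<in> VV i"
proof -
  assume i: "i < length Gs" and e: "e \<in> EE i"
  have "basic (VV i) (EE i) (c i) (c (Suc i))" using pbasic[OF i] .
  then show ?thesis unfolding basic_def using e by blast
qed

lemma edge_in_piece: "e \<in> E \<Longrightarrow> i < length Gs \<Longrightarrow> e \<subseteq> VV i \<Longrightarrow> e \<in> EE i"
proof -
  assume a: "e \<in> E" "i < length Gs" "e \<subseteq> VV i"
  obtain j where j: "j < length Gs" "e \<in> EE j" using edge_piece a by auto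
  obtain x y where xy: "x \<noteq> y" "e = {x, y}" "x \<in> VV j" "y \<in> VV j" using edge_two j by blast
  show ?thesis
  proof (cases i j rule: linorder_cases)
    case less then show ?thesis using inter[of i j x] inter[of i j y] xy a j by auto
  next
    case equal then show ?thesis using j by simp
  next
    case greater then show ?thesis using inter[of j i x] inter[of j i y] xy a j by auto
  qed
qed

lemma piece_reach: "i < length Gs \<Longrightarrow> reach E (VV i) (c i) (c (Suc i))"
proof -
  assume i: "i < length Gs"
  have "reach (EE i) (VV i) (c i) (c (Suc i))" using pbasic[OF i] by (simp add: basic_def)
  then show ?thesis using reach_mono[OF _ EE_sub[OF i] subset_refl] by simp
qed

lemma pre_t: "j < length Gs \<Longrightarrow> reach E (V - {t}) s (c j)"
proof -
  assume j: "j < length Gs"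
  have "reach E (V - {t}) (c 0) (c j)"
  proof (rule reach_chain)
    fix p assume p: "0 \<le> p" "p < j"
    have "VV p \<subseteq> V - {t}"
    proof
      fix x assume x: "x \<in> VV p"
      have "x \<noteq> t" using cmem[of "length Gs" p] x p j ck by auto
      then show "x \<in> V - {t}" using x VV_sub[of p] p j by auto
    qed
    then show "reach E (V - {t}) (c p) (c (Suc p))"
      using reach_mono[OF piece_reach[of p] subset_refl] p j by simp
  next
    show "c 0 \<in> V - {t}" using c_inj[of 0 "length Gs"] k0 ck c_in(1)[of 0] VV_sub[of 0] by auto
  qed simp
  then show ?thesis using c0 by simp
qed

lemma basic_serial: "basic V E s t"
proof -
  have st: "s \<noteq> t" using c_inj[of 0 "length Gs"] k0 c0 ck by auto
  have sV: "s \<in> V" using c_in(1)[of 0] VV_sub[of 0] k0 c0 by auto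
  have l1: "length Gs - 1 < length Gs" "Suc (length Gs - 1) = length Gs" using k0 by auto
  have tV: "t \<in> V" using c_in(2)[OF l1(1)] VV_sub[OF l1(1)] l1(2) ck by auto
  have ed: "\<forall>e\<in>E. \<exists>x y. x \<noteq> y \<and> e = {x, y} \<and> x \<in> V \<and> y \<in> V"
  proof
    fix e assume "e \<in> E"
    then obtain i where i: "i < length Gs" "e \<in> EE i" using edge_piece by auto
    then obtain x y where "x \<noteq> y" "e = {x, y}" "x \<in> VV i" "y \<in> VV i" using edge_two by blast
    then show "\<exists>x y. x \<noteq> y \<and> e = {x, y} \<and> x \<in> V \<and> y \<in> V" using VV_sub[OF i(1)] by auto
  qed
  have r: "reach E V s t"
  proof -
    have "reach E V (c 0) (c (length Gs))"
    proof (rule reach_chain)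
      fix p assume "0 \<le> p" "p < length Gs"
      then show "reach E V (c p) (c (Suc p))" using reach_mono[OF piece_reach subset_refl VV_sub] by simp
    next
      show "c 0 \<in> V" using c_in(1)[of 0] VV_sub[of 0] k0 by auto
    qed simp
    then show ?thesis using c0 ck by simp
  qed
  have av: "\<forall>v\<in>V. v \<noteq> t \<longrightarrow> reach E (V - {t}) s v"
  proof (intro ballI impI)
    fix v assume v: "v \<in> V" "v \<noteq> t"
    obtain m where m: "m < length Gs" "v \<in> VV m" using v V_eq by auto
    show "reach E (V - {t}) s v"
    proof (cases "v = c (Suc m)")
      case True
      then have "Suc m < length Gs" using v ck m by (metis Suc_lessI)
      then show ?thesis using pre_t True by simp
    next
      case False
      have "reach (EE m) (VV m - {c (Suc m)}) (c m) v"
        using pbasic[OF m(1)] m False by (auto simp: basic_def)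
      moreover have "VV m - {c (Suc m)} \<subseteq> V - {t}"
      proof
        fix x assume x: "x \<in> VV m - {c (Suc m)}"
        have "x \<noteq> t" using cmem[of "length Gs" m] x m ck by auto
        then show "x \<in> V - {t}" using x VV_sub m by auto
      qed
      ultimately have "reach E (V - {t}) (c m) v" using reach_mono[OF _ EE_sub[OF m(1)]] by simp
      then show ?thesis using reach_trans[OF _ pre_t[OF m(1)]] by simp
    qed
  qed
  show ?thesis using st sV tV ed r av by (simp add: basic_def)
qed

end

lemma osp_basic: "osp V E s t \<Longrightarrow> basic V E s t"
proof (induction rule: osp.induct)
  case (edge s t)
  show ?case using edge by (auto simp: basic_def intro: reach_edge reach.rrefl)
next
  case (serial V E s t Gs)
  interpret sc V E s t Gs using serial by unfold_locales auto
  show ?case by (rule basic_serial)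
next
  case (parallel V E s t Gs)
  have p: "length Gs \<ge> 2" "\<forall>i<length Gs. cs (Gs ! i) = s \<and> ct (Gs ! i) = t"
    "V = (\<Union>i<length Gs. cV (Gs ! i))" "E = (\<Union>i<length Gs. cE (Gs ! i))"
    using parallel(1) by (auto simp: parallel_cond_def)
  have p0: "0 < length Gs" using p(1) by (cases Gs) auto
  have b0: "basic (cV (Gs!0)) (cE (Gs!0)) s t" using parallel(2)[rule_format, OF p0] p(2)[rule_format, OF p0] by auto
  have sub: "\<And>i. i < length Gs \<Longrightarrow> cV (Gs!i) \<subseteq> V \<and> cE (Gs!i) \<subseteq> E" using p by auto
  have "s \<noteq> t \<and> s \<in> V \<and> t \<in> V \<and> reach (cE (Gs!0)) (cV (Gs!0)) s t" using b0 sub[OF p0]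
    by (auto simp: basic_def)
  then have "s \<noteq> t \<and> s \<in> V \<and> t \<in> V \<and> reach E V s t" using reach_mono[of "cE (Gs!0)" "cV (Gs!0)" s t E V] sub[OF p0] by simp
  moreover have "\<forall>e\<in>E. \<exists>x y. x \<noteq> y \<and> e = {x, y} \<and> x \<in> V \<and> y \<in> V"
  proof
    fix e assume "e \<in> E"
    then obtain i where i: "i < length Gs" "e \<in> cE (Gs!i)" using p by auto
    have "basic (cV (Gs!i)) (cE (Gs!i)) s t" using parallel(2) i p(2) by auto
    then obtain x y where "x \<noteq> y" "e = {x, y}" "x \<in> cV (Gs!i)" "y \<in> cV (Gs!i)" 
      using i unfolding basic_def by blast
    then show "\<exists>x y. x \<noteq> y \<and> e = {x, y} \<and> x \<in> V \<and> y \<in> V"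
      using sub[OF i(1)] by auto
  qed
  moreover have "\<forall>v\<in>V. v \<noteq> t \<longrightarrow> reach E (V - {t}) s v"
  proof (intro ballI impI)
    fix v assume v: "v \<in> V" "v \<noteq> t"
    then obtain i where i: "i < length Gs" "v \<in> cV (Gs!i)" using p by auto
    have "reach (cE (Gs!i)) (cV (Gs!i) - {t}) s v" using parallel(2) i v p(2) by (auto simp: basic_def)
    moreover have "cV (Gs!i) - {t} \<subseteq> V - {t}" using sub[OF i(1)] by auto
    ultimately show "reach E (V - {t}) s v" using reach_mono[of _ _ s v E "V - {t}"] sub[OF i(1)] by simp
  qed
  ultimately show ?case by (simp add: basic_def)
qed

lemma nonserial_reach:
  assumes "osp V E s t" "non_serial V E s t" "u \<noteq> s" "u \<noteq> t"
  shows "reach E (V - {u}) s t"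
  using assms(1)
proof (cases rule: osp.cases)
  case edge then show ?thesis using assms by (auto intro: reach_edge)
next
  case (serial Gs)
  then show ?thesis using assms(2) by (auto simp: non_serial_def serial_superedge_def)
next
  case (parallel Gs)
  have p: "length Gs \<ge> 2" "\<forall>i<length Gs. cs (Gs ! i) = s \<and> ct (Gs ! i) = t"
    "V = (\<Union>i<length Gs. cV (Gs ! i))" "E = (\<Union>i<length Gs. cE (Gs ! i))"
    "\<forall>i j. i < length Gs \<and> j < length Gs \<and> i \<noteq> j \<longrightarrow> cV (Gs ! i) \<inter> cV (Gs ! j) = {s, t}"
    using parallel(1) by (auto simp: parallel_cond_def)
  have p01: "0 < length Gs" "1 < length Gs" using p(1) by linarith+
  have p5: "cV (Gs ! 0) \<inter> cV (Gs ! 1) = {s, t}" using p(5)[rule_format, of 0 1] p01 by simp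
  obtain i where i: "i < length Gs" "u \<notin> cV (Gs ! i)"
  proof (cases "u \<in> cV (Gs ! 0)")
    case True then have "u \<notin> cV (Gs ! 1)" using p5 assms by auto
    then show ?thesis using that[OF p01(2)] by simp
  next
    case False then show ?thesis using that[OF p01(1)] by simp
  qed
  have "osp (cV (Gs!i)) (cE (Gs!i)) s t" using parallel(2) i p(2) by auto
  then have "reach (cE (Gs!i)) (cV (Gs!i)) s t"
    using osp_basic[of "cV (Gs!i)" "cE (Gs!i)" s t] by (simp add: basic_def)
  moreover have "cV (Gs!i) \<subseteq> V - {u}" "cE (Gs!i) \<subseteq> E" using i p by auto
  ultimately show ?thesis using reach_mono[of _ _ s t E "V - {u}"] by simp
qed


lemma Aut_or_carrier: "f \<in> carrier (Aut_or V E s t) \<longleftrightarrow>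
  bij_betw f V V \<and> (\<lambda>e. f ` e) ` E = E \<and> f s = s \<and> f t = t \<and> (\<forall>x. x \<notin> V \<longrightarrow> f x = x)"
  by (simp add: Aut_or_def)

lemma Aut_or_mult: "f \<otimes>\<^bsub>Aut_or V E s t\<^esub> g = f \<circ> g"
  by (simp add: Aut_or_def)

locale mn = sc +
  assumes posp: "\<forall>i < length Gs. osp (cV (Gs!i)) (cE (Gs!i)) (cs (Gs!i)) (ct (Gs!i))"
    and pns: "\<forall>i < length Gs. non_serial (cV (Gs!i)) (cE (Gs!i)) (cs (Gs!i)) (ct (Gs!i))"
begin

lemma piece_avoid:
  assumes i: "i < length Gs" and u: "u \<noteq> c i" "u \<noteq> c (Suc i)"
  shows "reach E (V - {u}) (c i) (c (Suc i))"
proof -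
  have "osp (VV i) (EE i) (c i) (c (Suc i))" "non_serial (VV i) (EE i) (c i) (c (Suc i))"
    using posp pns i cs_eq[OF i] ct_eq[OF i] by (auto simp: VV_def EE_def)
  then have "reach (EE i) (VV i - {u}) (c i) (c (Suc i))" using nonserial_reach u by metis
  moreover have "VV i - {u} \<subseteq> V - {u}" using VV_sub[OF i] by auto
  ultimately show ?thesis using reach_mono[OF _ EE_sub[OF i]] by simp
qed

lemma edge_sub: "i < length Gs \<Longrightarrow> e \<in> EE i \<Longrightarrow> e \<subseteq> VV i"
  using edge_two by blast

lemma cV: "j \<le> length Gs \<Longrightarrow> c j \<in> V"
proof -
  assume j: "j \<le> length Gs"
  show ?thesis
  proof (cases "j < length Gs")
    case True then show ?thesis using c_in(1)[OF True] VV_sub[OF True] by auto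
  next
    case False
    then obtain j' where j': "j = Suc j'" using j k0 by (cases j) auto
    then have "j' < length Gs" using j by simp
    then show ?thesis using c_in(2)[of j'] VV_sub[of j'] j' by auto
  qed
qed

lemma Xlem0: "reach E (V - {c l}) a v \<Longrightarrow> a = s \<Longrightarrow> 0 < l \<Longrightarrow> l \<le> length Gs \<Longrightarrow> \<exists>p<l. v \<in> VV p"
proof (induction rule: reach.induct)
  case rrefl then show ?case using c_in(1)[OF k0] c0 by auto
next
  case (rstep a b x)
  obtain p where p: "p < l" "b \<in> VV p" using rstep by auto
  obtain m where m: "m < length Gs" "{b, x} \<in> EE m" using edge_piece rstep(2) by blast
  have bx: "b \<in> VV m" "x \<in> VV m" using edge_sub[OF m] by auto
  show ?case
  proof (cases "m < l")
    case True then show ?thesis using bx by auto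
  next
    case False
    then have "p < m" using p by auto
    then have "m = Suc p \<and> b = c m" using inter[OF _ m(1) p(2) bx(1)] by auto
    moreover have "m = l" using p False calculation by linarith
    ultimately have "b = c l" by simp
    then show ?thesis using reach_W[OF rstep(1)] by auto
  qed
qed

lemma Xlem: "reach E (V - {c l}) s v \<Longrightarrow> 0 < l \<Longrightarrow> l \<le> length Gs \<Longrightarrow> \<exists>p<l. v \<in> VV p"
  using Xlem0 by blast

lemma Ylem:
  assumes v: "v \<in> VV m" and ml: "m < l" "l \<le> length Gs" and vc: "v \<notin> c ` {0..length Gs}"
  shows "reach E (V - {c l}) s v"
proof -
  have m: "m < length Gs" using ml by auto
  have "reach E (V - {c l}) (c 0) (c m)"
  proof (rule reach_chain)
    fix p assume p: "0 \<le> p" "p < m"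
    have "VV p \<subseteq> V - {c l}"
    proof
      fix x assume x: "x \<in> VV p"
      have "x \<noteq> c l" using cmem[of l p] x p ml by auto
      then show "x \<in> V - {c l}" using x VV_sub[of p] p ml by auto
    qed
    then show "reach E (V - {c l}) (c p) (c (Suc p))"
      using reach_mono[OF piece_reach[of p] subset_refl] p ml by simp
  next
    show "c 0 \<in> V - {c l}" using c_inj[of 0 l] ml cV[of 0] by auto
  qed simp
  then have r1: "reach E (V - {c l}) s (c m)" using c0 by simp
  have "v \<noteq> c (Suc m)" using vc ml by auto
  then have "reach (EE m) (VV m - {c (Suc m)}) (c m) v"
    using pbasic[of m, unfolded basic_def] m v by blast
  moreover have "VV m - {c (Suc m)} \<subseteq> V - {c l}"
  proof
    fix x assume x: "x \<in> VV m - {c (Suc m)}"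
    have "x \<noteq> c l" using cmem[of l m] x m ml by auto
    then show "x \<in> V - {c l}" using x VV_sub m by auto
  qed
  ultimately have "reach E (V - {c l}) (c m) v" using reach_mono[OF _ EE_sub[OF m]] by simp
  then show ?thesis using reach_trans[OF _ r1] by simp
qed

definition D where "D v = {u \<in> V - {s}. \<not> reach E (V - {u}) s v}"

lemma Dc: assumes j: "0 < j" "j \<le> length Gs" shows "D (c j) = c ` {1..j}"
proof
  show "D (c j) \<subseteq> c ` {1..j}"
  proof
    fix u assume u: "u \<in> D (c j)"
    show "u \<in> c ` {1..j}"
    proof (rule ccontr)
      assume nu: "u \<notin> c ` {1..j}"
      have us: "u \<noteq> s" "u \<in> V" using u by (auto simp: D_def)
      have "reach E (V - {u}) (c 0) (c j)"
      proof (rule reach_chain)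
        fix p assume p: "0 \<le> p" "p < j"
        have "u \<noteq> c p"
        proof (cases p)
          case 0 then show ?thesis using us c0 by auto
        next
          case (Suc q) then show ?thesis using nu p by auto
        qed
        moreover have "u \<noteq> c (Suc p)" using nu p by auto
        ultimately show "reach E (V - {u}) (c p) (c (Suc p))" using piece_avoid p j by auto
      next
        show "c 0 \<in> V - {u}" using cV[of 0] us c0 by auto
      qed (use j in simp)
      then show False using u c0 by (auto simp: D_def)
    qed
  qed
next
  show "c ` {1..j} \<subseteq> D (c j)"
  proof
    fix u assume "u \<in> c ` {1..j}"
    then obtain l where l: "1 \<le> l" "l \<le> j" "u = c l" by auto
    have "c l \<in> V" using cV l j by auto
    moreover have "c l \<noteq> s" using c_inj[of 0 l] l j c0 by auto
    moreover have "\<not> reach E (V - {c l}) s (c j)"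
    proof
      assume r: "reach E (V - {c l}) s (c j)"
      show False
      proof (cases "l = j")
        case True then show False using reach_W[OF r] by auto
      next
        case False
        then obtain p where p: "p < l" "c j \<in> VV p" using Xlem[OF r] l j by auto
        then show False using cmem[of j p] l j False by auto
      qed
    qed
    ultimately show "u \<in> D (c j)" using l by (auto simp: D_def)
  qed
qed

lemma c_inj_on: "inj_on c {0..length Gs}"
proof (rule inj_onI)
  fix x y assume "x \<in> {0..length Gs}" "y \<in> {0..length Gs}" "c x = c y"
  then show "x = y" using c_inj[of x y] c_inj[of y x] by (cases x y rule: linorder_cases) auto
qed

lemma card_Dc: "0 < j \<Longrightarrow> j \<le> length Gs \<Longrightarrow> card (D (c j)) = j"
proof -
  assume j: "0 < j" "j \<le> length Gs"
  have "inj_on c {1..j}" using inj_on_subset[OF c_inj_on] j by auto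
  then show ?thesis using Dc[OF j] card_image by fastforce
qed

context
  fixes f assumes f: "f \<in> carrier (Aut_or V E s t)"
begin

lemma fbij: "bij_betw f V V" and fE: "(\<lambda>e. f ` e) ` E = E" and fs: "f s = s" and ft: "f t = t"
  and fout: "x \<notin> V \<Longrightarrow> f x = x"
  using f by (auto simp: Aut_or_carrier)

lemma finj: "inj f"
proof (rule injI)
  fix x y assume xy: "f x = f y"
  have fV: "\<And>z. z \<in> V \<Longrightarrow> f z \<in> V" using fbij by (auto simp: bij_betw_def)
  show "x = y"
  proof (cases "x \<in> V"; cases "y \<in> V")
    assume "x \<in> V" "y \<in> V" then show ?thesis using xy fbij by (auto simp: bij_betw_def inj_on_def)
  next
    assume "x \<in> V" "y \<notin> V" then show ?thesis using xy fV fout by metis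
  next
    assume "x \<notin> V" "y \<in> V" then show ?thesis using xy fV fout by metis
  next
    assume "x \<notin> V" "y \<notin> V" then show ?thesis using xy fout by metis
  qed
qed

lemma fVimg: "f ` V = V" using fbij by (simp add: bij_betw_def)

lemma fV: "f x \<in> V \<longleftrightarrow> x \<in> V"
proof
  assume "f x \<in> V"
  then show "x \<in> V" using fout by (metis)
next
  assume "x \<in> V" then show "f x \<in> V" using fVimg by auto
qed

lemma fedge: "{x, y} \<in> E \<Longrightarrow> {f x, f y} \<in> E"
proof -
  assume "{x, y} \<in> E"
  then have "f ` {x, y} \<in> E" using fE by blast
  then show ?thesis by simp
qed

lemma fedge_back: "{f x, f y} \<in> E \<Longrightarrow> {x, y} \<in> E"
proof -
  assume "{f x, f y} \<in> E"
  then have "{f x, f y} \<in> (\<lambda>e. f ` e) ` E" using fE by simp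
  then obtain e where e: "e \<in> E" "f ` e = {f x, f y}" by auto
  from e(2) have "f ` e = f ` {x, y}" by (simp only: image_insert image_empty)
  then have "e = {x, y}" by (simp only: inj_image_eq_iff[OF finj])
  then show ?thesis using e by simp
qed

lemma fW: "f ` (V - {u}) = V - {f u}"
  using fVimg finj by (simp add: image_set_diff)

lemma reach_f: "reach E (V - {u}) s v \<longleftrightarrow> reach E (V - {f u}) s (f v)"
proof
  assume r: "reach E (V - {u}) s v"
  have fe: "\<forall>x y. {x, y} \<in> E \<longrightarrow> {f x, f y} \<in> E" using fedge by simp
  from reach_transfer[OF fe r] show "reach E (V - {f u}) s (f v)" using fW fs by simp
next
  assume "reach E (V - {f u}) s (f v)"
  then have r2: "reach E (f ` (V - {u})) (f s) (f v)" using fW fs by simp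
  have fb: "\<forall>x y. {f x, f y} \<in> E \<longrightarrow> {x, y} \<in> E" using fedge_back by simp
  from reach_transfer_back[OF finj fb r2 refl refl] show "reach E (V - {u}) s v" .
qed

lemma D_f: "D (f v) = f ` D v"
proof
  show "D (f v) \<subseteq> f ` D v"
  proof
    fix u' assume u': "u' \<in> D (f v)"
    then have u'1: "u' \<in> V" "u' \<noteq> s" "\<not> reach E (V - {u'}) s (f v)" unfolding D_def by blast+
    from u'1(1) obtain u where u: "u \<in> V" "u' = f u" using fVimg by blast
    have "u \<noteq> s" using u u'1(2) fs by metis
    moreover have "\<not> reach E (V - {u}) s v" using u'1(3) u(2) reach_f[of u v] by simp
    ultimately have "u \<in> D v" using u(1) unfolding D_def by blast
    then show "u' \<in> f ` D v" using u(2) by blast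
  qed
next
  show "f ` D v \<subseteq> D (f v)"
  proof
    fix u' assume "u' \<in> f ` D v"
    then obtain u where u: "u \<in> D v" "u' = f u" by blast
    then have u1: "u \<in> V" "u \<noteq> s" "\<not> reach E (V - {u}) s v" unfolding D_def by blast+
    have "f u \<in> V" using u1(1) fV by blast
    moreover have "f u \<noteq> s" using u1(2) fs finj by (metis injD)
    moreover have "\<not> reach E (V - {f u}) s (f v)" using u1(3) reach_f[of u v] by simp
    ultimately show "u' \<in> D (f v)" using u(2) unfolding D_def by blast
  qed
qed

lemma fc: "j \<le> length Gs \<Longrightarrow> f (c j) = c j"
proof -
  assume j: "j \<le> length Gs"
  show ?thesis
  proof (cases "j = 0")
    case True then show ?thesis using fs c0 by simp
  next
    case False
    have Dt: "D t = c ` {1..length Gs}" using Dc[of "length Gs"] k0 ck by simp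
    have "f ` D t = D t" using D_f[of t] ft by simp
    moreover have "c j \<in> D t" using Dt j False by auto
    ultimately have "f (c j) \<in> D t" by blast
    then obtain j' where j': "1 \<le> j'" "j' \<le> length Gs" "f (c j) = c j'" using Dt by auto
    have "card (D (c j')) = j'" using card_Dc j' by auto
    moreover have "D (c j') = f ` D (c j)" using D_f[of "c j"] j' by simp
    moreover have "card (f ` D (c j)) = card (D (c j))"
      using finj by (simp add: card_image inj_on_subset)
    moreover have "card (D (c j)) = j" using card_Dc j False by auto
    ultimately have "j' = j" by simp
    then show ?thesis using j' by simp
  qed
qed

lemma fc_back: "j \<le> length Gs \<Longrightarrow> f v = c j \<Longrightarrow> v = c j"
  using fc finj by (metis injD)

lemma fVV: assumes v: "v \<in> VV i" and i: "i < length Gs" shows "f v \<in> VV i"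
proof (cases "v \<in> c ` {0..length Gs}")
  case True
  then obtain j where "j \<le> length Gs" "v = c j" by auto
  then show ?thesis using fc v by simp
next
  case False
  have vV: "v \<in> V" using v VV_sub[OF i] by auto
  then have "f v \<in> V" using fV by simp
  then obtain m where m: "m < length Gs" "f v \<in> VV m" using V_eq by auto
  have fvc: "f v \<notin> c ` {0..length Gs}"
  proof
    assume "f v \<in> c ` {0..length Gs}"
    then obtain j where j: "j \<le> length Gs" "f v = c j" by auto
    then have "v = c j" by (rule fc_back)
    then show False using False j by auto
  qed
  show ?thesis
  proof (cases m i rule: linorder_cases)
    case less
    have "reach E (V - {c i}) s (f v)" using Ylem[OF m(2) less] i fvc by simp
    then have "reach E (V - {c i}) s v" using reach_f[of "c i" v] fc[of i] i by simp
    moreover have "0 < i" using less by simp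
    ultimately obtain p where p: "p < i" "v \<in> VV p" using Xlem[of i v] i by auto
    then have "i = Suc p \<and> v = c i" using inter[OF p(1) i p(2) v] by simp
    then show ?thesis using False i by auto
  next
    case equal then show ?thesis using m by simp
  next
    case greater
    have "reach E (V - {c (Suc i)}) s v" using Ylem[OF v, of "Suc i"] greater m False by simp
    then have "reach E (V - {c (Suc i)}) s (f v)" using reach_f[of "c (Suc i)" v] fc[of "Suc i"] greater m by simp
    moreover have "Suc i \<le> length Gs" using greater m by simp
    ultimately obtain p where p: "p < Suc i" "f v \<in> VV p" using Xlem[of "Suc i" "f v"] by auto
    then have "p < m" using greater by simp
    then have "m = Suc p \<and> f v = c m" using inter[OF _ m(1) p(2) m(2)] by simp
    then show ?thesis using fvc m by auto
  qed
qed

lemma fVV_iff: assumes v: "v \<in> V" and i: "i < length Gs" shows "f v \<in> VV i \<longleftrightarrow> v \<in> VV i"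
proof
  assume fv: "f v \<in> VV i"
  obtain m where m: "m < length Gs" "v \<in> VV m" using v V_eq by auto
  have fm: "f v \<in> VV m" using fVV[OF m(2) m(1)] .
  show "v \<in> VV i"
  proof (cases m i rule: linorder_cases)
    case less
    then have "f v = c i" using inter[OF less i fm fv] by simp
    then have "v = c i" using fc_back[OF less_imp_le[OF i]] by blast
    then show ?thesis using fv \<open>f v = c i\<close> by simp
  next
    case equal then show ?thesis using m by simp
  next
    case greater
    then have "f v = c m" using inter[OF greater m(1) fv fm] by simp
    then have "v = c m" using fc_back[OF less_imp_le[OF m(1)]] by blast
    then show ?thesis using fv \<open>f v = c m\<close> by simp
  qed
next
  assume "v \<in> VV i" then show "f v \<in> VV i" using fVV i by simp
qed

lemma fVV_img: assumes i: "i < length Gs" shows "f ` VV i = VV i"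
proof
  show "f ` VV i \<subseteq> VV i" using fVV i by auto
next
  show "VV i \<subseteq> f ` VV i"
  proof
    fix y assume y: "y \<in> VV i"
    then have "y \<in> V" using VV_sub i by auto
    then obtain x where x: "x \<in> V" "y = f x" using fVimg by auto
    then have "x \<in> VV i" using fVV_iff[OF x(1) i] y by simp
    then show "y \<in> f ` VV i" using x by auto
  qed
qed

lemma edge_V: "e \<in> E \<Longrightarrow> e \<subseteq> V"
proof -
  assume "e \<in> E"
  then obtain i where i: "i < length Gs" "e \<in> EE i" using edge_piece by blast
  then show ?thesis using edge_sub[OF i] VV_sub[OF i(1)] by simp
qed

lemma fEE: assumes i: "i < length Gs" shows "(\<lambda>e. f ` e) ` EE i = EE i"
proof
  show "(\<lambda>e. f ` e) ` EE i \<subseteq> EE i"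
  proof
    fix e' assume "e' \<in> (\<lambda>e. f ` e) ` EE i"
    then obtain e where e: "e \<in> EE i" "e' = f ` e" by auto
    have "e \<in> E" using e EE_sub i by auto
    then have "f ` e \<in> E" using fE by blast
    moreover have "f ` e \<subseteq> VV i" using edge_sub[OF i e(1)] fVV i by auto
    ultimately show "e' \<in> EE i" using edge_in_piece i e by simp
  qed
next
  show "EE i \<subseteq> (\<lambda>e. f ` e) ` EE i"
  proof
    fix e' assume e': "e' \<in> EE i"
    then have "e' \<in> E" using EE_sub i by auto
    then have "e' \<in> (\<lambda>e. f ` e) ` E" using fE by simp
    then obtain e where e: "e \<in> E" "e' = f ` e" by auto
    have "e \<subseteq> V" using edge_V e by simp
    moreover have "f ` e \<subseteq> VV i" using edge_sub[OF i e'] e by simp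
    ultimately have "e \<subseteq> VV i" using fVV_iff[OF _ i] by auto
    then have "e \<in> EE i" using edge_in_piece i e by simp
    then show "e' \<in> (\<lambda>e. f ` e) ` EE i" using e by auto
  qed
qed

definition res where "res i = (\<lambda>x. if x \<in> VV i then f x else x)"

lemma res_mem: assumes i: "i < length Gs"
  shows "res i \<in> carrier (Aut_or (VV i) (EE i) (c i) (c (Suc i)))"
proof -
  have "inj_on (res i) (VV i)" using finj by (auto simp: res_def inj_on_def dest: injD)
  moreover have "res i ` VV i = VV i" using fVV_img[OF i] by (auto simp: res_def)
  ultimately have b: "bij_betw (res i) (VV i) (VV i)" by (simp add: bij_betw_def)
  have "(\<lambda>e. res i ` e) ` EE i = (\<lambda>e. f ` e) ` EE i"
  proof (rule image_cong[OF refl])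
    fix e assume "e \<in> EE i"
    then have "e \<subseteq> VV i" using edge_sub i by simp
    then show "res i ` e = f ` e" by (auto simp: res_def)
  qed
  then have e: "(\<lambda>e. res i ` e) ` EE i = EE i" using fEE[OF i] by simp
  have "res i (c i) = c i" "res i (c (Suc i)) = c (Suc i)" using fc i by (auto simp: res_def)
  then show ?thesis using b e by (auto simp: Aut_or_carrier res_def)
qed

end

lemma res_mem': "f \<in> carrier (Aut_or V E s t) \<Longrightarrow> i < length Gs \<Longrightarrow>
  (\<lambda>x. if x \<in> VV i then f x else x) \<in> carrier (Aut_or (VV i) (EE i) (c i) (c (Suc i)))"
  using res_mem[of f i] by (simp add: res_def)

definition Phi where "Phi f = (\<lambda>i\<in>{..<length Gs}. (\<lambda>x. if x \<in> VV i then f x else x))"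

lemma A_eq: "i < length Gs \<Longrightarrow> Aut_or (cV (Gs!i)) (cE (Gs!i)) (cs (Gs!i)) (ct (Gs!i)) = Aut_or (VV i) (EE i) (c i) (c (Suc i))"
  using cs_eq ct_eq by (simp add: VV_def EE_def)

context
  fixes h assumes h: "h \<in> (\<Pi>\<^sub>E i\<in>{..<length Gs}. carrier (Aut_or (VV i) (EE i) (c i) (c (Suc i))))"
begin

lemma hcar: "i < length Gs \<Longrightarrow> h i \<in> carrier (Aut_or (VV i) (EE i) (c i) (c (Suc i)))"
  using h by auto

lemma hbij: "i < length Gs \<Longrightarrow> bij_betw (h i) (VV i) (VV i)"
  using hcar unfolding Aut_or_carrier by blast
lemma hE: "i < length Gs \<Longrightarrow> (\<lambda>e. h i ` e) ` EE i = EE i"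
  using hcar unfolding Aut_or_carrier by blast
lemma hc1: "i < length Gs \<Longrightarrow> h i (c i) = c i"
  using hcar unfolding Aut_or_carrier by blast
lemma hc2: "i < length Gs \<Longrightarrow> h i (c (Suc i)) = c (Suc i)"
  using hcar unfolding Aut_or_carrier by blast
lemma hout: "i < length Gs \<Longrightarrow> x \<notin> VV i \<Longrightarrow> h i x = x"
  using hcar unfolding Aut_or_carrier by blast

definition glue where
  "glue x = (if \<exists>i<length Gs. x \<in> VV i then h (LEAST i. i < length Gs \<and> x \<in> VV i) x else x)"

lemma glue_eq: assumes i: "i < length Gs" and x: "x \<in> VV i" shows "glue x = h i x"
proof -
  define i0 where "i0 = (LEAST i. i < length Gs \<and> x \<in> VV i)"
  have ex: "\<exists>i<length Gs. x \<in> VV i" using assms by blast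
  have i0: "i0 < length Gs \<and> x \<in> VV i0" unfolding i0_def by (rule LeastI[of _ i]) (use assms in simp)
  have le: "i0 \<le> i" unfolding i0_def by (rule Least_le) (use assms in simp)
  have g: "glue x = h i0 x" using ex by (simp add: glue_def i0_def)
  show ?thesis
  proof (cases "i0 = i")
    case True then show ?thesis using g by simp
  next
    case False
    then have lt: "i0 < i" using le by simp
    then have ic: "i = Suc i0 \<and> x = c i" using inter[OF lt i _ x] i0 by blast
    then have "h i0 x = x" using hc2[of i0] i0 by simp
    moreover have "h i x = x" using hc1[OF i] ic by simp
    ultimately show ?thesis using g by simp
  qed
qed

lemma glue_out: "x \<notin> V \<Longrightarrow> glue x = x"
  using V_eq by (auto simp: glue_def)

lemma glue_inj_aux:
  assumes ij: "i < j" "j < length Gs" and x: "x \<in> VV i" and y: "y \<in> VV j" and eq: "h i x = h j y"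
  shows "x = y"
proof -
  have i: "i < length Gs" using ij by simp
  have hx: "h i x \<in> VV i" using bij_betw_apply[OF hbij[OF i] x] .
  have hy: "h j y \<in> VV j" using bij_betw_apply[OF hbij[OF ij(2)] y] .
  have jc: "j = Suc i \<and> h j y = c j" using inter[OF ij hx[unfolded eq] hy] .
  have "h j y = h j (c j)" using jc hc1[OF ij(2)] by auto
  moreover have "c j \<in> VV j" using c_in(1)[OF ij(2)] .
  ultimately have yc: "y = c j" using hbij[OF ij(2)] y unfolding bij_betw_def inj_on_def by blast
  have "h i x = h i (c (Suc i))" using jc eq hc2[OF i] by auto
  moreover have "c (Suc i) \<in> VV i" using c_in(2)[OF i] .
  ultimately have "x = c (Suc i)" using hbij[OF i] x unfolding bij_betw_def inj_on_def by blast
  then show ?thesis using yc jc by simp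
qed

lemma glue_mem: "glue \<in> carrier (Aut_or V E s t)"
proof -
  have inj: "inj_on glue V"
  proof (rule inj_onI)
    fix x y assume x: "x \<in> V" and y: "y \<in> V" and eq: "glue x = glue y"
    obtain i where i: "i < length Gs" "x \<in> VV i" using x V_eq by auto
    obtain j where j: "j < length Gs" "y \<in> VV j" using y V_eq by auto
    have eq2: "h i x = h j y" using eq glue_eq[OF i] glue_eq[OF j] by simp
    show "x = y"
    proof (cases i j rule: linorder_cases)
      case less show ?thesis by (rule glue_inj_aux[OF less j(1) i(2) j(2) eq2])
    next
      case equal
      have "inj_on (h i) (VV i)" using hbij[OF i(1)] by (simp add: bij_betw_def)
      then show ?thesis using eq2 equal i(2) j(2) by (auto dest: inj_onD)
    next
      case greater then show ?thesis using glue_inj_aux[OF greater i(1) j(2) i(2) eq2[symmetric]] by simp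
    qed
  qed
  have img: "glue ` V = V"
  proof
    show "glue ` V \<subseteq> V"
    proof
      fix y assume "y \<in> glue ` V"
      then obtain x where x: "x \<in> V" "y = glue x" by auto
      obtain i where i: "i < length Gs" "x \<in> VV i" using x V_eq by auto
      have "y = h i x" using x glue_eq[OF i] by simp
      then have "y \<in> VV i" using bij_betw_apply[OF hbij[OF i(1)] i(2)] by simp
      then show "y \<in> V" using VV_sub[OF i(1)] by auto
    qed
  next
    show "V \<subseteq> glue ` V"
    proof
      fix y assume "y \<in> V"
      then obtain i where i: "i < length Gs" "y \<in> VV i" using V_eq by auto
      then obtain x where x: "x \<in> VV i" "y = h i x" using hbij[OF i(1)] unfolding bij_betw_def by auto
      have "y = glue x" using glue_eq[OF i(1) x(1)] x by simp
      moreover have "x \<in> V" using x VV_sub[OF i(1)] by auto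
      ultimately show "y \<in> glue ` V" by auto
    qed
  qed
  have edges: "(\<lambda>e. glue ` e) ` E = E"
  proof
    show "(\<lambda>e. glue ` e) ` E \<subseteq> E"
    proof
      fix e' assume "e' \<in> (\<lambda>e. glue ` e) ` E"
      then obtain e where e: "e \<in> E" "e' = glue ` e" by auto
      obtain i where i: "i < length Gs" "e \<in> EE i" using edge_piece e by blast
      have es: "e \<subseteq> VV i" using edge_sub[OF i] .
      have "glue ` e = h i ` e"
      proof (rule image_cong[OF refl])
        fix x assume "x \<in> e"
        then have "x \<in> VV i" using es by blast
        then show "glue x = h i x" by (rule glue_eq[OF i(1)])
      qed
      moreover have "h i ` e \<in> EE i"
      proof -
        have "h i ` e \<in> (\<lambda>e. h i ` e) ` EE i" using i(2) by (rule imageI)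
        then show ?thesis using hE[OF i(1)] by simp
      qed
      ultimately show "e' \<in> E" using e EE_sub[OF i(1)] by auto
    qed
  next
    show "E \<subseteq> (\<lambda>e. glue ` e) ` E"
    proof
      fix e' assume "e' \<in> E"
      then obtain i where i: "i < length Gs" "e' \<in> EE i" using edge_piece by blast
      then have "e' \<in> (\<lambda>e. h i ` e) ` EE i" using hE[OF i(1)] by simp
      then obtain e where e: "e \<in> EE i" "e' = h i ` e" by auto
      have es: "e \<subseteq> VV i" using edge_sub[OF i(1) e(1)] .
      have "glue ` e = h i ` e"
      proof (rule image_cong[OF refl])
        fix x assume "x \<in> e"
        then have "x \<in> VV i" using es by blast
        then show "glue x = h i x" by (rule glue_eq[OF i(1)])
      qed
      moreover have "e \<in> E" using e EE_sub[OF i(1)] by auto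
      ultimately show "e' \<in> (\<lambda>e. glue ` e) ` E" using e(2) by (intro image_eqI[of _ _ e]) simp_all
    qed
  qed
  have gs: "glue s = s" using glue_eq[OF k0 c_in(1)[OF k0]] hc1[OF k0] c0 by simp
  have l1: "length Gs - 1 < length Gs" "Suc (length Gs - 1) = length Gs" using k0 by auto
  have gt: "glue t = t" using glue_eq[OF l1(1) c_in(2)[OF l1(1)]] hc2[OF l1(1)] l1(2) ck by simp
  have bij: "bij_betw glue V V" using inj img by (simp add: bij_betw_def)
  have out: "\<forall>x. x \<notin> V \<longrightarrow> glue x = x" using glue_out by blast
  show ?thesis unfolding Aut_or_carrier using bij edges gs gt out by blast
qed

lemma Phi_glue: "Phi glue = h"
proof
  fix i
  show "Phi glue i = h i"
  proof (cases "i < length Gs")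
    case True
    show ?thesis
    proof
      fix x
      have P: "Phi glue i x = (if x \<in> VV i then glue x else x)" using True by (simp add: Phi_def)
      show "Phi glue i x = h i x"
      proof (cases "x \<in> VV i")
        case xi: True
        show ?thesis using P xi glue_eq[OF True xi] by simp
      next
        case xi: False
        show ?thesis using P xi hout[OF True xi] by simp
      qed
    qed
  next
    case False
    have "h i = undefined" using PiE_arb[OF h] False by simp
    moreover have "Phi glue i = undefined" using False by (simp add: Phi_def)
    ultimately show ?thesis by simp
  qed
qed

end

lemma Phi_mem: "f \<in> carrier (Aut_or V E s t) \<Longrightarrow>
  Phi f \<in> (\<Pi>\<^sub>E i\<in>{..<length Gs}. carrier (Aut_or (VV i) (EE i) (c i) (c (Suc i))))"
proof -
  assume f: "f \<in> carrier (Aut_or V E s t)"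
  have "\<forall>i\<in>{..<length Gs}. (\<lambda>x. if x \<in> VV i then f x else x) \<in> carrier (Aut_or (VV i) (EE i) (c i) (c (Suc i)))"
  proof
    fix i assume "i \<in> {..<length Gs}"
    then have "i < length Gs" by simp
    from res_mem'[OF f this] show "(\<lambda>x. if x \<in> VV i then f x else x) \<in> carrier (Aut_or (VV i) (EE i) (c i) (c (Suc i)))" .
  qed
  then show ?thesis unfolding Phi_def restrict_PiE_iff .
qed

lemma carrier_P: "carrier (product_group {..<length Gs} (\<lambda>i. Aut_or (cV (Gs!i)) (cE (Gs!i)) (cs (Gs!i)) (ct (Gs!i))))
  = (\<Pi>\<^sub>E i\<in>{..<length Gs}. carrier (Aut_or (VV i) (EE i) (c i) (c (Suc i))))"
proof -
  have "carrier (product_group {..<length Gs} (\<lambda>i. Aut_or (cV (Gs!i)) (cE (Gs!i)) (cs (Gs!i)) (ct (Gs!i))))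
    = (\<Pi>\<^sub>E i\<in>{..<length Gs}. carrier (Aut_or (cV (Gs!i)) (cE (Gs!i)) (cs (Gs!i)) (ct (Gs!i))))"
    by (simp only: carrier_product_group)
  also have "\<dots> = (\<Pi>\<^sub>E i\<in>{..<length Gs}. carrier (Aut_or (VV i) (EE i) (c i) (c (Suc i))))"
    by (rule PiE_cong) (simp add: A_eq)
  finally show ?thesis .
qed

lemma Phi_iso: "Phi \<in> iso (Aut_or V E s t)
   (product_group {..<length Gs} (\<lambda>i. Aut_or (cV (Gs!i)) (cE (Gs!i)) (cs (Gs!i)) (ct (Gs!i))))"
proof -
  let ?P = "product_group {..<length Gs} (\<lambda>i. Aut_or (cV (Gs!i)) (cE (Gs!i)) (cs (Gs!i)) (ct (Gs!i)))"
  have mem: "Phi \<in> carrier (Aut_or V E s t) \<rightarrow> carrier ?P"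
  proof (rule Pi_I)
    fix f assume "f \<in> carrier (Aut_or V E s t)"
    then show "Phi f \<in> carrier ?P" using Phi_mem carrier_P by simp
  qed
  have mult: "Phi (f \<otimes>\<^bsub>Aut_or V E s t\<^esub> g) = Phi f \<otimes>\<^bsub>?P\<^esub> Phi g"
    if f: "f \<in> carrier (Aut_or V E s t)" and g: "g \<in> carrier (Aut_or V E s t)" for f g
  proof -
    have "Phi (f \<circ> g) = (\<lambda>i\<in>{..<length Gs}. Phi f i \<circ> Phi g i)"
    proof
      fix i
      show "Phi (f \<circ> g) i = (\<lambda>i\<in>{..<length Gs}. Phi f i \<circ> Phi g i) i"
      proof (cases "i < length Gs")
        case True
        show ?thesis
        proof
          fix x
          show "Phi (f \<circ> g) i x = (\<lambda>i\<in>{..<length Gs}. Phi f i \<circ> Phi g i) i x"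
            using True fVV[OF g, of x i] by (simp add: Phi_def)
        qed
      next
        case False then show ?thesis by (simp add: Phi_def)
      qed
    qed
    then show ?thesis by (simp add: Aut_or_mult)
  qed
  have hom: "Phi \<in> hom (Aut_or V E s t) ?P" using mem mult by (simp add: hom_def)
  have inj: "inj_on Phi (carrier (Aut_or V E s t))"
  proof (rule inj_onI)
    fix f g assume f: "f \<in> carrier (Aut_or V E s t)" and g: "g \<in> carrier (Aut_or V E s t)"
      and eq: "Phi f = Phi g"
    show "f = g"
    proof
      fix x
      show "f x = g x"
      proof (cases "x \<in> V")
        case True
        then obtain i where i: "i < length Gs" "x \<in> VV i" using V_eq by auto
        have "Phi f i x = Phi g i x" using eq by simp
        then show ?thesis using i by (simp add: Phi_def)
      next
        case False then show ?thesis using fout[OF f] fout[OF g] by simp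
      qed
    qed
  qed
  have surj: "Phi ` carrier (Aut_or V E s t) = carrier ?P"
  proof
    show "Phi ` carrier (Aut_or V E s t) \<subseteq> carrier ?P" using mem by auto
  next
    show "carrier ?P \<subseteq> Phi ` carrier (Aut_or V E s t)"
    proof
      fix h assume "h \<in> carrier ?P"
      then have h: "h \<in> (\<Pi>\<^sub>E i\<in>{..<length Gs}. carrier (Aut_or (VV i) (EE i) (c i) (c (Suc i))))"
        using carrier_P by simp
      show "h \<in> Phi ` carrier (Aut_or V E s t)"
      proof (rule image_eqI)
        show "h = Phi (glue h)" using Phi_glue[OF h] by simp
        show "glue h \<in> carrier (Aut_or V E s t)" by (rule glue_mem[OF h])
      qed
    qed
  qed
  show ?thesis using hom inj surj by (simp add: iso_def bij_betw_def)
qed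

end

theorem theorem5p3:
  fixes V :: "'a set" and E :: "'a set set" and s t :: 'a and Gs :: "'a comp list"
  assumes "serial_cond V E s t Gs"
    and "\<forall>i < length Gs. osp (cV (Gs ! i)) (cE (Gs ! i)) (cs (Gs ! i)) (ct (Gs ! i))"
    and "\<forall>i < length Gs. non_serial (cV (Gs ! i)) (cE (Gs ! i)) (cs (Gs ! i)) (ct (Gs ! i))"
  shows "Aut_or V E s t \<cong>
           product_group {..<length Gs} (\<lambda>i. Aut_or (cV (Gs ! i)) (cE (Gs ! i)) (cs (Gs ! i)) (ct (Gs ! i)))"
proof -
  have pb: "\<forall>i<length Gs. basic (cV (Gs ! i)) (cE (Gs ! i)) (cs (Gs ! i)) (ct (Gs ! i))"
  proof (intro allI impI)
    fix i assume "i < length Gs"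
    then have "osp (cV (Gs ! i)) (cE (Gs ! i)) (cs (Gs ! i)) (ct (Gs ! i))" using assms(2) by simp
    then show "basic (cV (Gs ! i)) (cE (Gs ! i)) (cs (Gs ! i)) (ct (Gs ! i))" by (rule osp_basic)
  qed
  interpret mn V E s t Gs
    apply (rule mn.intro)
     apply (rule sc.intro[OF assms(1) pb])
    apply (rule mn_axioms.intro[OF assms(2) assms(3)])
    done
  show ?thesis unfolding is_iso_def using Phi_iso by blast
qed

end
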